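(* Let $M>0$, $\beta^*>0$, $0<I_0<M$, and let $g$ be the log-normal density $g(t)=\frac{1}{t\sigma\sqrt{2\pi}}\exp\!\big(-\frac{(\ln t-\mu)^2}{2\sigma^2}\big)$ for $t>0$, $g(t)=0$ for $t\le0$ ($\mu\in\mathbb{R}$, $\sigma>0$). Let $I$ be the unique $C^1$ solution on $[0,\infty)$ of \[ I'(t)=\beta^*(M-I(t))\Big(I(t)-\int_0^t g(t-s)I(s)\,ds\Big),\qquad I(0)=I_0, \] and set $I_a(t)=I(t)-\int_0^t g(t-s)I(s)\,ds$. Then the improper integral $\int_0^\infty I_a(t)\,dt$ converges. *)

theory Defs
  imports "HOL-Analysis.Analysis"
begin

definition lognormal_density :: "real \<Rightarrow> real \<Rightarrow> real \<Rightarrow> real" where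
  "lognormal_density \<mu> \<sigma> t =
     (if t > 0 then exp (- ((ln t - \<mu>)\<^sup>2) / (2 * \<sigma>\<^sup>2)) / (t * \<sigma> * sqrt (2 * pi)) else 0)"

end

theory Submission imports Defs "HOL-Probability.Distributions" begin


lemma lnd_nonneg: "lognormal_density m s t \<ge> 0" if "s > 0"
  using that unfolding lognormal_density_def by auto

lemma lnd_powr_bound:
  fixes m s k t :: real
  assumes s: "s > 0" and t: "t > 0"
  shows "t powr k * lognormal_density m s t \<le> exp ((k - 1) * m + (k - 1)\<^sup>2 * s\<^sup>2 / 2) / (s * sqrt (2*pi))"
proof -
  define w where "w = ln t"
  have tw: "t = exp w" using t w_def by simp
  have "t powr k * lognormal_density m s t = exp (k*w) * exp (- ((w - m)\<^sup>2) / (2 * s\<^sup>2)) / (exp w * s * sqrt (2 * pi))"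
    using t by (simp add: lognormal_density_def powr_def w_def)
  also have "\<dots> = exp (k*w - w - (w - m)\<^sup>2 / (2 * s\<^sup>2)) / (s * sqrt (2 * pi))"
  proof -
    have "exp (k*w - w - (w - m)\<^sup>2 / (2 * s\<^sup>2)) = exp (k*w) * exp (- ((w - m)\<^sup>2) / (2 * s\<^sup>2)) / exp w"
      by (simp add: exp_diff exp_add[symmetric] exp_minus[symmetric] algebra_simps diff_divide_distrib)
    then show ?thesis by simp
  qed
  also have "\<dots> \<le> exp ((k - 1) * m + (k - 1)\<^sup>2 * s\<^sup>2 / 2) / (s * sqrt (2*pi))"
  proof -
    have "k*w - w - (w - m)\<^sup>2 / (2 * s\<^sup>2) \<le> (k - 1) * m + (k - 1)\<^sup>2 * s\<^sup>2 / 2"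
    proof -
      have "0 \<le> (w - m - (k - 1) * s\<^sup>2)\<^sup>2 / (2 * s\<^sup>2)" by simp
      also have "\<dots> = (k - 1) * m + (k - 1)\<^sup>2 * s\<^sup>2 / 2 - (k*w - w - (w - m)\<^sup>2 / (2 * s\<^sup>2))"
        using s by (simp add: field_simps power2_eq_square)
      finally show ?thesis by simp
    qed
    then show ?thesis using s by (intro divide_right_mono) auto
  qed
  finally show ?thesis .
qed

lemma lnd_bounded:
  assumes s: "s > 0"
  shows "\<exists>C. \<forall>t. lognormal_density m s t \<le> C"
proof -
  define C where "C = exp ((0 - 1) * m + (0 - 1)\<^sup>2 * s\<^sup>2 / 2) / (s * sqrt (2 * pi))"
  have "lognormal_density m s t \<le> max C 0" for t
  proof (cases "t > 0")
    case True
    from lnd_powr_bound[OF s True, of 0 m] True show ?thesis unfolding C_def by simp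
  next
    case False then show ?thesis by (simp add: lognormal_density_def)
  qed
  then show ?thesis by blast
qed

lemma lnd_lin:
  assumes s: "s > 0"
  shows "\<exists>C. \<forall>t. \<bar>lognormal_density m s t\<bar> \<le> C * \<bar>t\<bar>"
proof -
  define C where "C = exp ((-1 - 1) * m + (-1 - 1)\<^sup>2 * s\<^sup>2 / 2) / (s * sqrt (2 * pi))"
  have C0: "C \<ge> 0" unfolding C_def using s by (intro divide_nonneg_pos) auto
  have "\<bar>lognormal_density m s t\<bar> \<le> C * \<bar>t\<bar>" for t
  proof (cases "t > 0")
    case True
    have "t powr (-1) * lognormal_density m s t \<le> C"
      using lnd_powr_bound[OF s True, of "-1" m] unfolding C_def .
    moreover have "t powr (-1) = 1 / t" using True by (simp add: powr_minus powr_one divide_inverse)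
    ultimately have "lognormal_density m s t / t \<le> C" by simp
    then show ?thesis using True lnd_nonneg[OF s, of m t] by (simp add: divide_le_eq mult.commute)
  next
    case False then show ?thesis using C0 by (simp add: lognormal_density_def mult_nonneg_nonpos)
  qed
  then show ?thesis by blast
qed

lemma lnd_cube:
  assumes s: "s > 0"
  shows "\<exists>C. \<forall>t>0. t ^ 3 * lognormal_density m s t \<le> C"
proof -
  define C where "C = exp ((3 - 1) * m + (3 - 1)\<^sup>2 * s\<^sup>2 / 2) / (s * sqrt (2 * pi))"
  have "t ^ 3 * lognormal_density m s t \<le> C" if "t > 0" for t
  proof -
    have "t powr 3 * lognormal_density m s t \<le> C"
      using lnd_powr_bound[OF s that, of 3 m] unfolding C_def .
    moreover have "t powr 3 = t ^ 3" using that by (simp add: powr_numeral)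
    ultimately show ?thesis by simp
  qed
  then show ?thesis by blast
qed

lemma lnd_isCont:
  assumes s: "s > 0"
  shows "isCont (lognormal_density m s) x"
proof -
  consider "x > 0" | "x < 0" | "x = 0" by linarith
  then show ?thesis
  proof cases
    case 1
    have "continuous_on {0<..} (lognormal_density m s)"
    proof (rule continuous_on_cong[THEN iffD1])
      show "continuous_on {0<..} (\<lambda>t. exp (- ((ln t - m)\<^sup>2) / (2 * s\<^sup>2)) / (t * s * sqrt (2 * pi)))"
        using s by (intro continuous_intros) auto
    qed (auto simp: lognormal_density_def)
    then show ?thesis using 1 continuous_on_eq_continuous_at[OF open_greaterThan] by auto
  next
    case 2
    have "continuous_on {..<0} (lognormal_density m s)"
    proof (rule continuous_on_cong[THEN iffD1])
      show "continuous_on {..<0} (\<lambda>t. 0::real)" by (intro continuous_intros)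
    qed (auto simp: lognormal_density_def)
    then show ?thesis using 2 continuous_on_eq_continuous_at[OF open_lessThan] by auto
  next
    case 3
    obtain C where C: "\<And>t. \<bar>lognormal_density m s t\<bar> \<le> C * \<bar>t\<bar>" using lnd_lin[OF s] by blast
    have "(lognormal_density m s \<longlongrightarrow> 0) (at 0)"
    proof (rule Lim_null_comparison)
      show "\<forall>\<^sub>F t in at 0. norm (lognormal_density m s t) \<le> C * \<bar>t\<bar>" using C by simp
      show "((\<lambda>t. C * \<bar>t\<bar>) \<longlongrightarrow> 0) (at (0::real))"
      proof -
        have "((\<lambda>t. C * \<bar>t\<bar>) \<longlongrightarrow> C * \<bar>0\<bar>) (at (0::real))"
          by (intro tendsto_intros)
        then show ?thesis by simp
      qed
    qed
    then show ?thesis using 3 unfolding isCont_def by (simp add: lognormal_density_def)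
  qed
qed

lemma lnd_cont: "s > 0 \<Longrightarrow> continuous_on A (lognormal_density m s)"
  by (simp add: continuous_at_imp_continuous_on lnd_isCont)

lemma phi_has_int: "(std_normal_density has_integral 1) UNIV"
proof -
  have "(std_normal_density has_integral (integral\<^sup>L lborel std_normal_density)) UNIV"
    by (rule has_integral_integral_lborel) simp
  moreover have "integral\<^sup>L lborel std_normal_density = 1" using integral_normal_density[of 0 1] by simp
  ultimately show ?thesis by simp
qed

lemma phi_cont: "continuous_on A std_normal_density"
  unfolding std_normal_density_def by (intro continuous_intros) auto

lemma phi_le1: "integral {a..b} std_normal_density \<le> 1"
proof -
  have "integral {a..b} std_normal_density \<le> integral UNIV std_normal_density"
    by (rule integral_subset_le) (auto intro: integrable_continuous_real phi_cont phi_has_int[THEN has_integral_integrable])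
  then show ?thesis using phi_has_int integral_unique by metis
qed

lemma phi_near1:
  assumes "e > 0"
  shows "\<exists>B>0. \<forall>a b. a \<le> -B \<longrightarrow> B \<le> b \<longrightarrow> integral {a..b} std_normal_density > 1 - e"
proof -
  from phi_has_int[unfolded has_integral_alt'] assms obtain B where B: "B > 0"
    "\<forall>a b. ball 0 B \<subseteq> cbox a b \<longrightarrow> norm (integral (cbox a b) std_normal_density - 1) < e"
    by auto
  have "integral {a..b} std_normal_density > 1 - e" if "a \<le> -B" "B \<le> b" for a b
  proof -
    have "ball 0 B \<subseteq> cbox a b" using that by (auto simp: dist_real_def)
    with B(2) have "norm (integral (cbox a b) std_normal_density - 1) < e" by blast
    then show ?thesis by auto
  qed
  with B(1) show ?thesis by blast
qed

context
  fixes m s :: real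
  assumes s: "s > 0"
begin

lemma lnd_subst:
  assumes "0 < a" "a \<le> b"
  shows "(lognormal_density m s has_integral integral {(ln a - m)/s..(ln b - m)/s} std_normal_density) {a..b}"
proof -
  define z where "z u = (ln u - m) / s" for u
  have "((\<lambda>u. (1 / (s * u)) *\<^sub>R std_normal_density (z u)) has_integral integral {z a..z b} std_normal_density) {a..b}"
  proof (rule has_integral_substitution[where c = "z a" and d = "z b"])
    show "z a \<le> z b" using assms s unfolding z_def by (simp add: divide_right_mono)
    show "z ` {a..b} \<subseteq> {z a..z b}" using assms s unfolding z_def by (auto simp: divide_right_mono)
    show "continuous_on {z a..z b} std_normal_density" by (rule phi_cont)
    fix x assume x: "x \<in> {a..b}"
    then have "x > 0" using assms by auto
    then show "(z has_real_derivative 1 / (s * x)) (at x within {a..b})"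
      unfolding z_def using s by (auto intro!: derivative_eq_intros)
  qed (use assms in auto)
  moreover have "(1 / (s * u)) *\<^sub>R std_normal_density (z u) = lognormal_density m s u" if "u \<in> {a..b}" for u
  proof -
    have u: "u > 0" using that assms by auto
    have "(z u)\<^sup>2 / 2 = (ln u - m)\<^sup>2 / (2 * s\<^sup>2)" unfolding z_def using s by (simp add: power_divide)
    then show ?thesis using u s unfolding std_normal_density_def lognormal_density_def
      by (simp add: field_simps)
  qed
  ultimately show ?thesis unfolding z_def by (rule has_integral_eq[rotated]) auto
qed

lemma lnd_int: "lognormal_density m s integrable_on {a..b}"
  by (intro integrable_continuous_real lnd_cont s)

lemma lnd_int_nonneg: "integral {a..b} (lognormal_density m s) \<ge> 0"
  by (intro integral_nonneg lnd_int lnd_nonneg s)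

lemma lnd_split:
  assumes "a \<le> c" "c \<le> b"
  shows "integral {a..b} (lognormal_density m s) = integral {a..c} (lognormal_density m s) + integral {c..b} (lognormal_density m s)"
  using Henstock_Kurzweil_Integration.integral_combine[OF assms lnd_int] by simp

lemma G_le1:
  assumes T: "T \<ge> 0"
  shows "integral {0..T} (lognormal_density m s) \<le> 1"
proof (cases "T = 0")
  case True then show ?thesis by simp
next
  case False
  with T have T: "T > 0" by simp
  obtain C where C: "\<And>t. lognormal_density m s t \<le> C" using lnd_bounded[OF s] by blast
  have C0: "C \<ge> 0" using C[of 0] by (simp add: lognormal_density_def)
  show ?thesis
  proof (rule field_le_epsilon)
    fix e :: real assume e: "e > 0"
    define \<epsilon> where "\<epsilon> = min T (e / (C + 1))"
    have \<epsilon>: "0 < \<epsilon>" "\<epsilon> \<le> T" using T e C0 by (auto simp: \<epsilon>_def)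
    have "integral {0..\<epsilon>} (lognormal_density m s) \<le> integral {0..\<epsilon>} (\<lambda>_. C)"
      by (rule integral_le) (auto intro: lnd_int C)
    also have "\<dots> = C * \<epsilon>" using \<epsilon> by simp
    also have "\<dots> \<le> e"
    proof -
      have "C * \<epsilon> \<le> (C + 1) * (e / (C + 1))" using C0 \<epsilon> by (intro mult_mono) (auto simp: \<epsilon>_def)
      also have "\<dots> = e" using C0 by simp
      finally show ?thesis .
    qed
    finally have 1: "integral {0..\<epsilon>} (lognormal_density m s) \<le> e" .
    have "integral {\<epsilon>..T} (lognormal_density m s) = integral {(ln \<epsilon> - m)/s..(ln T - m)/s} std_normal_density"
      using lnd_subst[OF \<epsilon>] by (simp add: integral_unique)
    also have "\<dots> \<le> 1" by (rule phi_le1)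
    finally show "integral {0..T} (lognormal_density m s) \<le> 1 + e"
      using lnd_split[of 0 \<epsilon> T] \<epsilon> 1 by simp
  qed
qed

lemma G_near1:
  assumes e: "e > 0"
  shows "\<exists>T0>0. integral {0..T0} (lognormal_density m s) > 1 - e"
proof -
  obtain B where B: "B > 0" "\<And>a b. a \<le> -B \<Longrightarrow> B \<le> b \<Longrightarrow> integral {a..b} std_normal_density > 1 - e"
    using phi_near1[OF e] by blast
  define T0 where "T0 = exp (m + s * B)"
  define \<epsilon> where "\<epsilon> = exp (m - s * B)"
  have \<epsilon>: "0 < \<epsilon>" "\<epsilon> \<le> T0" using s B unfolding \<epsilon>_def T0_def by auto
  have z: "(ln \<epsilon> - m)/s = -B" "(ln T0 - m)/s = B" using s unfolding \<epsilon>_def T0_def by auto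
  have "integral {\<epsilon>..T0} (lognormal_density m s) = integral {-B..B} std_normal_density"
    using lnd_subst[OF \<epsilon>] z by (simp add: integral_unique)
  also have "\<dots> > 1 - e" using B by simp
  finally have "integral {\<epsilon>..T0} (lognormal_density m s) > 1 - e" .
  then have "integral {0..T0} (lognormal_density m s) > 1 - e"
    using lnd_split[of 0 \<epsilon> T0] \<epsilon> lnd_int_nonneg[of 0 \<epsilon>] by simp
  then show ?thesis using \<epsilon> by (intro exI[of _ T0]) auto
qed

lemma G_mono:
  assumes "0 \<le> a" "a \<le> b"
  shows "integral {0..a} (lognormal_density m s) \<le> integral {0..b} (lognormal_density m s)"
  using lnd_split[of 0 a b] assms lnd_int_nonneg[of a b] by simp

lemma G_lt1:
  assumes t: "t \<ge> 0"
  shows "integral {0..t} (lognormal_density m s) < 1"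
proof -
  have "\<exists>x\<in>{t+1..t+2}. \<forall>y\<in>{t+1..t+2}. lognormal_density m s x \<le> lognormal_density m s y"
    by (rule continuous_attains_inf) (auto intro: lnd_cont s)
  then obtain x where x: "x \<in> {t+1..t+2}" "\<And>y. y \<in> {t+1..t+2} \<Longrightarrow> lognormal_density m s x \<le> lognormal_density m s y"
    by blast
  have x0: "x > 0" using x(1) t by auto
  have xp: "lognormal_density m s x > 0" unfolding lognormal_density_def using x0 s by simp
  have "integral {t+1..t+2} (\<lambda>_. lognormal_density m s x) \<le> integral {t+1..t+2} (lognormal_density m s)"
    by (rule integral_le) (auto intro: lnd_int x(2))
  moreover have "integral {t+1..t+2} (\<lambda>_. lognormal_density m s x) = lognormal_density m s x" by simp
  ultimately have p: "integral {t+1..t+2} (lognormal_density m s) > 0" using xp by linarith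
  have "integral {0..t+2} (lognormal_density m s) = integral {0..t} (lognormal_density m s) + integral {t..t+1} (lognormal_density m s) + integral {t+1..t+2} (lognormal_density m s)"
    using lnd_split[of 0 t "t+2"] lnd_split[of t "t+1" "t+2"] t by simp
  moreover have "integral {0..t+2} (lognormal_density m s) \<le> 1" using G_le1 t by simp
  ultimately show ?thesis using p lnd_int_nonneg[of t "t+1"] by simp
qed

lemma G_tail_cube:
  shows "\<exists>C. \<forall>u\<ge>1. 1 - integral {0..u} (lognormal_density m s) \<le> C / (2 * u\<^sup>2)"
proof -
  obtain C where C: "\<And>t. t > 0 \<Longrightarrow> t ^ 3 * lognormal_density m s t \<le> C" using lnd_cube[OF s] by blast
  have "1 - integral {0..u} (lognormal_density m s) \<le> C / (2 * u\<^sup>2)" if u: "u \<ge> 1" for u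
  proof (rule field_le_epsilon)
    fix e :: real assume e: "e > 0"
    obtain T0 where T0: "T0 > 0" "integral {0..T0} (lognormal_density m s) > 1 - e" using G_near1[OF e] by blast
    define T where "T = max T0 u"
    have T: "T \<ge> u" "T \<ge> T0" unfolding T_def by auto
    have "integral {0..T} (lognormal_density m s) > 1 - e" using G_mono[of T0 T] T T0 by simp
    moreover have "integral {0..T} (lognormal_density m s) = integral {0..u} (lognormal_density m s) + integral {u..T} (lognormal_density m s)"
      using lnd_split[of 0 u T] T u by simp
    moreover have "integral {u..T} (lognormal_density m s) \<le> C / (2 * u\<^sup>2)"
    proof -
      have "((\<lambda>v. C / v ^ 3) has_integral ((- C / (2 * T\<^sup>2)) - (- C / (2 * u\<^sup>2)))) {u..T}"
      proof (rule fundamental_theorem_of_calculus)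
        show "u \<le> T" by (rule T)
        fix x assume x: "x \<in> {u..T}"
        then have "x > 0" using u by auto
        then show "((\<lambda>v. - C / (2 * v\<^sup>2)) has_vector_derivative C / x ^ 3) (at x within {u..T})"
          unfolding has_real_derivative_iff_has_vector_derivative[symmetric]
          by (auto intro!: derivative_eq_intros simp: field_simps power2_eq_square power3_eq_cube)
      qed
      then have "integral {u..T} (\<lambda>v. C / v ^ 3) = C / (2 * u\<^sup>2) - C / (2 * T\<^sup>2)"
        by (simp add: integral_unique)
      moreover have "integral {u..T} (lognormal_density m s) \<le> integral {u..T} (\<lambda>v. C / v ^ 3)"
      proof (rule integral_le)
        show "(\<lambda>v. C / v ^ 3) integrable_on {u..T}"
          using \<open>((\<lambda>v. C / v ^ 3) has_integral _) _\<close> by blast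
        fix x assume "x \<in> {u..T}"
        then have x: "x > 0" using u by auto
        show "lognormal_density m s x \<le> C / x ^ 3" using C[OF x] x by (simp add: field_simps mult.commute)
      qed (rule lnd_int)
      moreover have "C / (2 * T\<^sup>2) \<ge> 0"
      proof -
        have "C \<ge> 0" using C[of 1] lnd_nonneg[OF s, of m 1] by simp
        then show ?thesis by simp
      qed
      ultimately show ?thesis by simp
    qed
    ultimately show "1 - integral {0..u} (lognormal_density m s) \<le> C / (2 * u\<^sup>2) + e" by simp
  qed
  then show ?thesis by blast
qed

lemma G_tail:
  "\<exists>K\<ge>0. \<forall>u\<ge>0. 0 \<le> 1 - integral {0..u} (lognormal_density m s) \<and>
      1 - integral {0..u} (lognormal_density m s) \<le> K / (1 + u)\<^sup>2"
proof -
  obtain C where C: "\<And>u. u \<ge> 1 \<Longrightarrow> 1 - integral {0..u} (lognormal_density m s) \<le> C / (2 * u\<^sup>2)"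
    using G_tail_cube by blast
  define K where "K = 4 * max 1 (C / 2)"
  have K0: "K \<ge> 0" unfolding K_def by simp
  have "0 \<le> 1 - integral {0..u} (lognormal_density m s) \<and>
      1 - integral {0..u} (lognormal_density m s) \<le> K / (1 + u)\<^sup>2" if u: "u \<ge> 0" for u
  proof
    show "0 \<le> 1 - integral {0..u} (lognormal_density m s)" using G_le1[OF u] by simp
    have p: "(1 + u)\<^sup>2 > 0" using u by simp
    show "1 - integral {0..u} (lognormal_density m s) \<le> K / (1 + u)\<^sup>2"
    proof (cases "u \<ge> 1")
      case True
      have "1 - integral {0..u} (lognormal_density m s) \<le> C / (2 * u\<^sup>2)" by (rule C[OF True])
      also have "\<dots> = (C / 2) / u\<^sup>2" by simp
      also have "\<dots> \<le> max 1 (C / 2) / u\<^sup>2" by (rule divide_right_mono) auto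
      also have "\<dots> \<le> K / (1 + u)\<^sup>2"
      proof -
        have "(1 + u)\<^sup>2 \<le> 4 * u\<^sup>2" using mult_nonneg_nonneg[of "3*u+1" "u-1"] True by (simp add: power2_eq_square algebra_simps)
        then have "max 1 (C / 2) * (1 + u)\<^sup>2 \<le> max 1 (C / 2) * (4 * u\<^sup>2)"
          by (intro mult_left_mono) auto
        then show ?thesis using True p unfolding K_def
          by (simp add: divide_simps mult.assoc mult.commute mult.left_commute)
      qed
      finally show ?thesis .
    next
      case False
      have "1 - integral {0..u} (lognormal_density m s) \<le> 1" using lnd_int_nonneg[of 0 u] by simp
      also have "1 \<le> K / (1 + u)\<^sup>2"
      proof -
        have "(1 + u)\<^sup>2 \<le> 2\<^sup>2" using False u by (intro power_mono) auto
        then have "(1 + u)\<^sup>2 \<le> 4" by simp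
        also have "4 \<le> K" unfolding K_def by simp
        finally show ?thesis using p by simp
      qed
      finally show ?thesis .
    qed
  qed
  with K0 show ?thesis by blast
qed

lemma lnd_shift:
  assumes "0 \<le> x" "x \<le> T"
  shows "integral {0..T} (\<lambda>t. lognormal_density m s (t - x)) = integral {0..T - x} (lognormal_density m s)"
proof -
  have "integral {0..T} (\<lambda>t. lognormal_density m s (t - x)) = integral {-x - (-x)..(T-x) - (-x)} (\<lambda>t. lognormal_density m s (t + (-x)))"
    by simp
  also have "\<dots> = integral {-x..T-x} (lognormal_density m s)" by (rule integral_shift_real_ivl)
  also have "\<dots> = integral {-x..0} (lognormal_density m s) + integral {0..T-x} (lognormal_density m s)"
    using lnd_split[of "-x" 0 "T - x"] assms by simp
  also have "integral {-x..0} (lognormal_density m s) = integral {-x..0} (\<lambda>_. 0::real)"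
    by (rule integral_cong) (auto simp: lognormal_density_def)
  finally show ?thesis by simp
qed

lemma lnd_refl:
  "integral {0..t} (\<lambda>x. lognormal_density m s (t - x)) = integral {0..t} (lognormal_density m s)"
proof -
  have "integral {0..t} (\<lambda>x. lognormal_density m s (t - x)) = integral {-t - (-t)..0 - (-t)} (\<lambda>x. (\<lambda>y. lognormal_density m s (- y)) (x + (-t)))"
    by (simp add: algebra_simps)
  also have "\<dots> = integral {-t..0} (\<lambda>y. lognormal_density m s (- y))" by (rule integral_shift_real_ivl)
  also have "\<dots> = integral {0..t} (lognormal_density m s)"
    using Henstock_Kurzweil_Integration.integral_reflect_real[of t 0 "lognormal_density m s"] by simp
  finally show ?thesis .
qed

end

lemma ftc_bound:
  fixes K T :: real
  assumes "T \<ge> 0" "K \<ge> 0"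
  shows "((\<lambda>x. K / (1 + T - x)\<^sup>2) has_integral (K - K / (1 + T))) {0..T}"
proof -
  have "((\<lambda>x. K / (1 + T - x)\<^sup>2) has_integral (K / (1 + T - T) - K / (1 + T - 0))) {0..T}"
  proof (rule fundamental_theorem_of_calculus[where f="\<lambda>x. K / (1 + T - x)"])
    show "0 \<le> T" by fact
    fix x assume x: "x \<in> {0..T}"
    then have "1 + T - x > 0" by auto
    then show "((\<lambda>x. K / (1 + T - x)) has_vector_derivative K / (1 + T - x)\<^sup>2) (at x within {0..T})"
      unfolding has_real_derivative_iff_has_vector_derivative[symmetric]
      by (auto intro!: derivative_eq_intros simp: field_simps power2_eq_square)
  qed
  then show ?thesis by simp
qed



theorem proposition3p9:
  fixes M \<beta> I\<^sub>0 \<mu> \<sigma> :: real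
    and I I' :: "real \<Rightarrow> real"
  assumes "M > 0" and "\<beta> > 0" and "0 < I\<^sub>0" and "I\<^sub>0 < M" and "\<sigma> > 0"
    and "I 0 = I\<^sub>0"
    and "continuous_on {0..} I'"
    and "\<And>t. t \<ge> 0 \<Longrightarrow> (I has_real_derivative I' t) (at t within {0..})"
    and "\<And>t. t \<ge> 0 \<Longrightarrow>
           I' t = \<beta> * (M - I t) *
                  (I t - integral {0..t} (\<lambda>s. lognormal_density \<mu> \<sigma> (t - s) * I s))"
  shows "(\<forall>T\<ge>0. (\<lambda>t. I t - integral {0..t} (\<lambda>s. lognormal_density \<mu> \<sigma> (t - s) * I s))
                    integrable_on {0..T}) \<and>
         (\<exists>L. ((\<lambda>T. integral {0..T}
                    (\<lambda>t. I t - integral {0..t} (\<lambda>s. lognormal_density \<mu> \<sigma> (t - s) * I s)))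
                 \<longlongrightarrow> L) at_top)"
proof -
  note s = assms(5)
  define g where "g = lognormal_density \<mu> \<sigma>"
  define J where "J t = integral {0..t} (\<lambda>x. g (t - x) * I x)" for t
  define A where "A t = I t - J t" for t
  have Aeq: "(\<lambda>t. I t - integral {0..t} (\<lambda>s. lognormal_density \<mu> \<sigma> (t - s) * I s)) = A"
    by (auto simp: A_def J_def g_def fun_eq_iff)
  have ODE: "I' t = \<beta> * (M - I t) * A t" if "t \<ge> 0" for t
    using assms(9)[OF that] by (simp add: A_def J_def g_def)
  have gcont: "continuous_on X g" for X unfolding g_def by (rule lnd_cont[OF s])
  have gnn: "g x \<ge> 0" for x unfolding g_def by (rule lnd_nonneg[OF s])
  have Icont: "continuous_on {0..} I"
    unfolding continuous_on_eq_continuous_within using assms(8) DERIV_continuous by fastforce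
  have IcontT: "continuous_on {a..b} I" if "a \<ge> 0" for a b
    using continuous_on_subset[OF Icont] that by auto
  have Fcont: "continuous_on ({0..T} \<times> {0..T}) (\<lambda>p. g (fst p - snd p) * I (snd p))" for T
  proof (intro continuous_on_mult)
    show "continuous_on ({0..T} \<times> {0..T}) (\<lambda>p. g (fst p - snd p))"
      by (intro continuous_on_compose2[OF gcont[of UNIV]] continuous_intros) auto
    show "continuous_on ({0..T} \<times> {0..T}) (\<lambda>p. I (snd p))"
      by (intro continuous_on_compose2[OF Icont] continuous_intros) auto
  qed
  have Fcont1: "continuous_on {0..T} (\<lambda>x. g (t - x) * I x)" for t T
    by (intro continuous_on_mult continuous_on_compose2[OF gcont[of UNIV]] continuous_intros IcontT) auto
  have Jeq: "J t = integral {0..T} (\<lambda>x. g (t - x) * I x)" if "0 \<le> t" "t \<le> T" for t T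
  proof -
    have "integral {0..T} (\<lambda>x. g (t - x) * I x) = integral {0..t} (\<lambda>x. g (t - x) * I x) + integral {t..T} (\<lambda>x. g (t - x) * I x)"
      using Henstock_Kurzweil_Integration.integral_combine[OF that integrable_continuous_real[OF Fcont1]] by simp
    moreover have "integral {t..T} (\<lambda>x. g (t - x) * I x) = integral {t..T} (\<lambda>_. 0::real)"
      by (rule integral_cong) (auto simp: g_def lognormal_density_def)
    ultimately show ?thesis by (simp add: J_def)
  qed
  have Jcont: "continuous_on {0..T} J" for T
  proof -
    have "continuous_on {0..T} (\<lambda>t. integral (cbox 0 T) (\<lambda>x. g (t - x) * I x))"
      by (rule integral_continuous_on_param) (use Fcont[of T] in \<open>simp add: case_prod_beta' cbox_interval\<close>)
    then show ?thesis by (rule continuous_on_cong[THEN iffD1, rotated 2]) (auto simp: Jeq cbox_interval)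
  qed
  have Acont: "continuous_on {0..T} A" for T
    unfolding A_def by (intro continuous_on_diff IcontT Jcont) auto
  have Aint: "A integrable_on {0..T}" for T by (rule integrable_continuous_real[OF Acont])
  have A0: "A 0 = I\<^sub>0" by (simp add: A_def J_def assms(6))
  have Iless: "I T < M" if T: "T \<ge> 0" for T
  proof -
    define \<Phi> where "\<Phi> t = (M - I t) * exp (\<beta> * integral {0..t} A)" for t
    have "(\<Phi> has_field_derivative 0) (at t within {0..T})" if t: "t \<in> {0..T}" for t
    proof -
      have dI: "(I has_field_derivative I' t) (at t within {0..T})"
        using DERIV_subset[OF assms(8)[of t]] t by auto
      have dV: "((\<lambda>x. integral {0..x} A) has_field_derivative A t) (at t within {0..T})"
        by (rule integral_has_real_derivative[OF Acont t])
      have d: "(\<Phi> has_field_derivative ((- I' t) * exp (\<beta> * integral {0..t} A) + (M - I t) * (exp (\<beta> * integral {0..t} A) * (\<beta> * A t)))) (at t within {0..T})"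
        unfolding \<Phi>_def by (auto intro!: derivative_eq_intros dI dV)
      have e0: "(- I' t) * exp (\<beta> * integral {0..t} A) + (M - I t) * (exp (\<beta> * integral {0..t} A) * (\<beta> * A t)) = 0"
      proof -
        have e: "I' t = \<beta> * (M - I t) * A t" using ODE t by auto
        show ?thesis unfolding e by (simp add: algebra_simps)
      qed
      show ?thesis using d[unfolded e0] .
    qed
    then obtain c where c: "\<And>x. x \<in> {0..T} \<Longrightarrow> \<Phi> x = c"
      using has_field_derivative_zero_constant[of "{0..T}" \<Phi>] by auto
    have "\<Phi> T = \<Phi> 0" using c[of T] c[of 0] T by auto
    also have "\<Phi> 0 = M - I\<^sub>0" by (simp add: \<Phi>_def assms(6))
    finally have "(M - I T) * exp (\<beta> * integral {0..T} A) = M - I\<^sub>0" by (simp add: \<Phi>_def)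
    then have "(M - I T) * exp (\<beta> * integral {0..T} A) > 0" using assms(4) by simp
    then show ?thesis by (simp add: zero_less_mult_iff)
  qed
  have dIat: "DERIV I y :> I' y" if "y > 0" for y
  proof -
    have "(I has_field_derivative I' y) (at y within {0<..})"
    proof (rule DERIV_subset[OF assms(8)])
      show "0 \<le> y" using that by simp
      show "{0<..} \<subseteq> {0::real..}" by (auto simp: subset_eq)
    qed
    then show ?thesis using at_within_open[of y "{0<..}"] that by simp
  qed
  have Apos: "A T > 0" if T: "T \<ge> 0" for T
  proof (rule ccontr)
    assume nT: "\<not> A T > 0"
    define S where "S = {0..T} \<inter> A -` {..0}"
    have TS: "T \<in> S" using nT T by (auto simp: S_def)
    have clS: "closed S" unfolding S_def by (rule continuous_closed_preimage[OF Acont]) auto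
    have bS: "bdd_below S" unfolding S_def by (auto intro: bdd_belowI[of _ 0])
    define ts where "ts = Inf S"
    have tsS: "ts \<in> S" unfolding ts_def using closed_contains_Inf[OF _ bS clS] TS by auto
    then have ts: "0 \<le> ts" "ts \<le> T" "A ts \<le> 0" by (auto simp: S_def)
    have below: "A x > 0" if "0 \<le> x" "x < ts" for x
    proof (rule ccontr)
      assume "\<not> A x > 0"
      then have "x \<in> S" using that ts by (auto simp: S_def)
      then have "ts \<le> x" unfolding ts_def by (rule cInf_lower[OF _ bS])
      then show False using that by simp
    qed
    have ts0: "ts > 0" using ts A0 assms(3) by (cases "ts = 0") auto
    have Imono: "I x \<le> I ts" if "0 \<le> x" "x \<le> ts" for x
    proof (rule DERIV_nonneg_imp_increasing_open[OF that(2)])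
      fix y assume y: "x < y" "y < ts"
      have "I' y \<ge> 0" using ODE[of y] y that below[of y] Iless[of y] assms(2) by simp
      then show "\<exists>d. DERIV I y :> d \<and> 0 \<le> d" using dIat[of y] y that by auto
    next
      show "continuous_on {x..ts} I" using IcontT that by simp
    qed
    have Its: "I ts > 0" using Imono[of 0] ts assms(3,6) by auto
    have "J ts = integral {0..ts} (\<lambda>x. g (ts - x) * I x)" by (simp add: J_def)
    also have "\<dots> \<le> integral {0..ts} (\<lambda>x. g (ts - x) * I ts)"
    proof (rule integral_le)
      show "(\<lambda>x. g (ts - x) * I x) integrable_on {0..ts}" by (rule integrable_continuous_real[OF Fcont1])
      show "(\<lambda>x. g (ts - x) * I ts) integrable_on {0..ts}"
        by (intro integrable_continuous_real continuous_on_mult continuous_on_compose2[OF gcont[of UNIV]] continuous_intros) auto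
      fix x assume "x \<in> {0..ts}"
      then show "g (ts - x) * I x \<le> g (ts - x) * I ts" using Imono[of x] gnn by (auto intro: mult_left_mono)
    qed
    also have "\<dots> = integral {0..ts} g * I ts" using lnd_refl[OF s, of ts \<mu>] by (simp add: g_def)
    also have "\<dots> < I ts" using G_lt1[OF s ts(1), of \<mu>] Its by (simp add: g_def)
    finally have "A ts > 0" by (simp add: A_def)
    then show False using ts by simp
  qed
  have Imono: "I x \<le> I y" if "0 \<le> x" "x \<le> y" for x y
  proof (rule DERIV_nonneg_imp_increasing_open[OF that(2)])
    fix z assume z: "x < z" "z < y"
    have "I' z \<ge> 0" using ODE[of z] z that Apos[of z] Iless[of z] assms(2) by simp
    then show "\<exists>d. DERIV I z :> d \<and> 0 \<le> d" using dIat[of z] z that by auto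
  next
    show "continuous_on {x..y} I" using IcontT that by simp
  qed
  have Ipos: "I x \<ge> 0" if "x \<ge> 0" for x using Imono[of 0 x] that assms(3,6) by simp
  obtain K where K: "K \<ge> 0" "\<And>u. u \<ge> 0 \<Longrightarrow> 0 \<le> 1 - integral {0..u} g \<and> 1 - integral {0..u} g \<le> K / (1 + u)\<^sup>2"
    using G_tail[OF s, of \<mu>] unfolding g_def by blast
  define V where "V T = integral {0..T} A" for T
  have Vbound: "V T \<le> M * K" if T: "T \<ge> 0" for T
  proof -
    define H where "H x = integral {0..T} (\<lambda>t. g (t - x) * I x)" for x
    have Fc2: "continuous_on (cbox (0, 0) (T, T)) (\<lambda>(x, t). g (t - x) * I x)"
    proof -
      have "continuous_on ({0..T} \<times> {0..T}) (\<lambda>p. g (snd p - fst p) * I (fst p))"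
      proof (intro continuous_on_mult)
        show "continuous_on ({0..T} \<times> {0..T}) (\<lambda>p. g (snd p - fst p))"
          by (intro continuous_on_compose2[OF gcont[of UNIV]] continuous_intros) auto
        show "continuous_on ({0..T} \<times> {0..T}) (\<lambda>p. I (fst p))"
          by (intro continuous_on_compose2[OF Icont] continuous_intros) auto
      qed
      then show ?thesis unfolding cbox_Pair_eq by (simp add: cbox_interval case_prod_beta')
    qed
    have Hint: "H integrable_on {0..T}"
      using integral_integrable_2dim[OF Fc2] unfolding H_def by (simp add: cbox_interval)
    have Iint: "I integrable_on {0..T}" by (rule integrable_continuous_real[OF IcontT]) simp
    have Jint: "J integrable_on {0..T}" by (rule integrable_continuous_real[OF Jcont])
    have "integral {0..T} J = integral {0..T} (\<lambda>t. integral {0..T} (\<lambda>x. g (t - x) * I x))"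
      by (rule integral_cong) (auto simp: Jeq)
    also have "\<dots> = integral {0..T} H"
    proof -
      have "continuous_on (cbox (0, 0) (T, T)) (\<lambda>(t, x). g (t - x) * I x)"
        using Fcont[of T] unfolding cbox_Pair_eq by (simp add: cbox_interval case_prod_beta')
      from integral_swap_continuous[of 0 0 T T "\<lambda>t x. g (t - x) * I x", OF this]
      show ?thesis unfolding H_def by (simp add: cbox_interval)
    qed
    finally have JH: "integral {0..T} J = integral {0..T} H" .
    have "V T = integral {0..T} I - integral {0..T} J"
      unfolding V_def A_def by (rule integral_diff[OF Iint Jint])
    also have "\<dots> = integral {0..T} (\<lambda>x. I x - H x)"
      unfolding JH by (rule integral_diff[OF Iint Hint, symmetric])
    also have "\<dots> \<le> integral {0..T} (\<lambda>x. M * K / (1 + T - x)\<^sup>2)"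
    proof (rule integral_le)
      show "(\<lambda>x. I x - H x) integrable_on {0..T}" by (intro integrable_diff Iint Hint)
      show "(\<lambda>x. M * K / (1 + T - x)\<^sup>2) integrable_on {0..T}"
        using ftc_bound[OF T, of "M * K"] K(1) assms(1) by (auto simp: has_integral_integrable)
      fix x assume x: "x \<in> {0..T}"
      have "H x = I x * integral {0..T} (\<lambda>t. g (t - x))"
        by (simp add: H_def mult.commute)
      also have "integral {0..T} (\<lambda>t. g (t - x)) = integral {0..T - x} g"
        using lnd_shift[OF s, of x T \<mu>] x by (simp add: g_def)
      finally have "I x - H x = I x * (1 - integral {0..T - x} g)" by (simp add: algebra_simps)
      also have "\<dots> \<le> M * (K / (1 + (T - x))\<^sup>2)"
      proof (rule mult_mono)
        show "I x \<le> M" using Iless[of x] x by simp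
        show "1 - integral {0..T - x} g \<le> K / (1 + (T - x))\<^sup>2" using K(2)[of "T - x"] x by simp
        show "0 \<le> M" using assms(1) by simp
        show "0 \<le> 1 - integral {0..T - x} g" using K(2)[of "T - x"] x by simp
      qed
      finally show "I x - H x \<le> M * K / (1 + T - x)\<^sup>2" by (simp add: algebra_simps)
    qed
    also have "\<dots> = M * K - M * K / (1 + T)"
      using ftc_bound[OF T, of "M * K"] K(1) assms(1) by (simp add: integral_unique)
    also have "\<dots> \<le> M * K" using K(1) assms(1) T by simp
    finally show ?thesis .
  qed
  have Vmono: "V a \<le> V b" if "0 \<le> a" "a \<le> b" for a b
  proof -
    have "V b = V a + integral {a..b} A"
      unfolding V_def using Henstock_Kurzweil_Integration.integral_combine[OF that Aint] by simp
    moreover have "integral {a..b} A \<ge> 0"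
    proof (rule integral_nonneg)
      show "A integrable_on {a..b}"
        by (rule integrable_continuous_real, rule continuous_on_subset[OF Acont[of b]]) (use that in auto)
      fix x assume "x \<in> {a..b}"
      then show "0 \<le> A x" using Apos[of x] that by simp
    qed
    ultimately show ?thesis by simp
  qed
  define L where "L = Sup (V ` {0..})"
  have bdd: "bdd_above (V ` {0..})" using Vbound by (auto intro: bdd_aboveI[of _ "M * K"])
  have lim: "(V \<longlongrightarrow> L) at_top"
  proof (rule increasing_tendsto)
    have "\<forall>n\<ge>0. V n \<le> L" unfolding L_def using bdd by (auto intro: cSUP_upper)
    then show "\<forall>\<^sub>F n in at_top. V n \<le> L" unfolding eventually_at_top_linorder by blast
    fix x assume "x < L"
    then obtain a where a: "a \<in> {0..}" "x < V a" unfolding L_def using less_cSUP_iff[OF _ bdd, of x] by blast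
    have "\<forall>n\<ge>a. x < V n"
    proof (intro allI impI)
      fix n assume "n \<ge> a"
      then have "V a \<le> V n" using Vmono[of a n] a(1) by simp
      then show "x < V n" using a(2) by simp
    qed
    then show "\<forall>\<^sub>F n in at_top. x < V n" unfolding eventually_at_top_linorder by blast
  qed
  have lim': "((\<lambda>T. integral {0..T} A) \<longlongrightarrow> L) at_top" using lim unfolding V_def .
  show ?thesis unfolding Aeq using Aint lim' by blast
qed

end
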